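(* Let $N\ge1$, let $\mathcal L\in\mathbb{R}^{N\times N}$ be the Laplacian of an undirected graph $\mathcal G$ on $N$ nodes, and let $\Delta\in\mathbb{R}^{N\times N}$ be a diagonal matrix with every diagonal entry in $\{0,1\}$. Then every nonzero eigenvalue of $\mathcal H=\mathcal L+\Delta$ is not less than $$\lambda_H:=\frac{4}{N(N^2-N+4)}>0.$$
   Context: The graph $\mathcal G$ has node set $\{1,\dots,N\}$ and adjacency entries $a_{ij}\in\{0,1\}$ with $a_{ij}=a_{ji}$ (undirected, no self-loops); its Laplacian $\mathcal L$ has $l_{ii}=\sum_{j=1}^Na_{ij}$ and $l_{ij}=-a_{ij}$ for $i\ne j$. *)

theory Defs
  imports "Jordan_Normal_Form.Char_Poly"
begin

text \<open>Graph Laplacian of the graph on nodes 0..N-1 (paper: 1..N) with adjacency entries a i j.\<close>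
definition laplacian :: "nat \<Rightarrow> (nat \<Rightarrow> nat \<Rightarrow> real) \<Rightarrow> real mat" where
  "laplacian N a = mat N N (\<lambda>(i,j). if i = j then (\<Sum>k<N. a i k) else - a i j)"

end

theory Submission
  imports Defs
begin

inductive reach :: "nat \<Rightarrow> (nat\<Rightarrow>nat\<Rightarrow>real) \<Rightarrow> nat \<Rightarrow> nat \<Rightarrow> bool" for N a where
  rrefl: "i < N \<Longrightarrow> reach N a i i"
| rstep: "reach N a i j \<Longrightarrow> k < N \<Longrightarrow> a j k = 1 \<Longrightarrow> reach N a i k"

lemma reach_lt: "reach N a i j \<Longrightarrow> i < N \<and> j < N" by (induction rule: reach.induct) auto

lemma reach_trans: "reach N a j k \<Longrightarrow> reach N a i j \<Longrightarrow> reach N a i k"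
  by (induction rule: reach.induct) (auto intro: reach.rstep)

lemma reach_sym:
  assumes sym: "\<And>i j. i<N \<Longrightarrow> j<N \<Longrightarrow> a i j = a j i"
  shows "reach N a i j \<Longrightarrow> reach N a j i"
proof (induction rule: reach.induct)
  case (rrefl i) then show ?case by (rule reach.rrefl)
next
  case (rstep i j k)
  have "j < N" using reach_lt[OF rstep.hyps(1)] by simp
  have "reach N a k j" using reach.rstep[OF reach.rrefl[OF rstep.hyps(2)] \<open>j<N\<close>] sym[OF \<open>j<N\<close> rstep.hyps(2)] rstep.hyps(3) by simp
  then show ?case using reach_trans rstep.IH by blast
qed

lemma reach_path: "reach N a i j \<Longrightarrow> \<exists>p. p \<noteq> [] \<and> hd p = i \<and> last p = j \<and> distinct p
   \<and> successively (\<lambda>x y. a x y = 1) p \<and> (\<forall>x\<in>set p. reach N a i x)"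
proof (induction rule: reach.induct)
  case (rrefl i) then show ?case by (intro exI[of _ "[i]"]) (auto intro: reach.rrefl)
next
  case (rstep i j k)
  obtain p where p: "p \<noteq> []" "hd p = i" "last p = j" "distinct p"
     "successively (\<lambda>x y. a x y = 1) p" "\<forall>x\<in>set p. reach N a i x" using rstep.IH by blast
  show ?case
  proof (cases "k \<in> set p")
    case True
    then obtain xs ys where pe: "p = xs @ k # ys" by (meson split_list)
    show ?thesis
    proof (intro exI[of _ "xs @ [k]"] conjI)
      show "hd (xs @ [k]) = i" using p(2) pe by (cases xs) auto
      show "distinct (xs @ [k])" using p(4) pe by auto
      show "successively (\<lambda>x y. a x y = 1) (xs @ [k])"
        using p(5) pe by (auto simp: successively_append_iff)
      show "\<forall>x\<in>set (xs @ [k]). reach N a i x" using p(6) pe by auto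
    qed auto
  next
    case False
    show ?thesis
    proof (intro exI[of _ "p @ [k]"] conjI)
      show "hd (p @ [k]) = i" using p by simp
      show "distinct (p @ [k])" using p(4) False by auto
      show "successively (\<lambda>x y. a x y = 1) (p @ [k])"
        using p rstep by (auto simp: successively_append_iff)
      show "\<forall>x\<in>set (p @ [k]). reach N a i x" using p(6) reach.rstep[OF rstep.hyps] by auto
    qed auto
  qed
qed

fun psum :: "(nat\<Rightarrow>real) \<Rightarrow> nat list \<Rightarrow> real" where
  "psum v (x # y # zs) = (v y - v x)^2 + psum v (y # zs)"
| "psum v _ = 0"

lemma psum_nonneg: "psum v p \<ge> 0"
  by (induction v p rule: psum.induct) auto

lemma aux_ineq:
  fixes d D k S :: real
  assumes "D^2 \<le> k * S" "S \<ge> 0" "k \<ge> 0"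
  shows "(d + D)^2 \<le> (k+1) * (d^2 + S)"
proof (cases "k = 0")
  case True
  then have "D = 0" using assms by simp
  then show ?thesis using True assms by simp
next
  case False
  then have kp: "k > 0" using assms by simp
  have "k * (d+D)^2 \<le> k * ((k+1) * d^2) + (k+1) * D^2"
  proof -
    have "0 \<le> (k*d - D)^2" by simp
    then show ?thesis by (simp add: power2_eq_square algebra_simps)
  qed
  also have "\<dots> \<le> k * ((k+1) * d^2) + (k+1) * (k * S)"
    using assms kp by (intro add_left_mono mult_left_mono) auto
  also have "\<dots> = k * ((k+1) * (d^2 + S))" by (simp add: algebra_simps)
  finally show ?thesis using kp by simp
qed

lemma psum_cs: "p \<noteq> [] \<Longrightarrow> (v (last p) - v (hd p))^2 \<le> real (length p - 1) * psum v p"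
proof (induction v p rule: psum.induct)
  case (1 v x y zs)
  have IH: "(v (last (y#zs)) - v y)^2 \<le> real (length zs) * psum v (y # zs)" using 1 by simp
  have "(v (last (x#y#zs)) - v x)^2 = ((v y - v x) + (v (last (y#zs)) - v y))^2" by simp
  also have "\<dots> \<le> (real (length zs) + 1) * ((v y - v x)^2 + psum v (y#zs))"
    by (rule aux_ineq[OF IH psum_nonneg]) simp
  finally show ?case by (simp add: add.commute)
qed auto

lemma psum_edges:
  assumes "distinct p" "successively (\<lambda>x y. a x y = 1) p"
    "\<And>x y. x \<in> set p \<Longrightarrow> y \<in> set p \<Longrightarrow> a x y \<ge> 0"
    "\<And>x y. x \<in> set p \<Longrightarrow> y \<in> set p \<Longrightarrow> a x y = a y x"
  shows "2 * psum v p \<le> (\<Sum>x\<in>set p. \<Sum>y\<in>set p. a x y * (v x - v y)^2)"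
  using assms
proof (induction v p rule: psum.induct)
  case (1 v x y zs)
  let ?T = "set (y#zs)"
  let ?g = "\<lambda>x y. a x y * (v x - v y)^2"
  have xT: "x \<notin> ?T" using 1 by simp
  have IH: "2 * psum v (y#zs) \<le> (\<Sum>x\<in>?T. \<Sum>y\<in>?T. ?g x y)" using 1 by simp
  have axy: "a x y = 1" using 1(3) by simp
  have fin: "finite ?T" by simp
  have s1: "(\<Sum>u\<in>?T. ?g x u) \<ge> ?g x y"
    by (rule member_le_sum) (use 1(4) in auto)
  have s2: "(\<Sum>u\<in>?T. ?g u x) = (\<Sum>u\<in>?T. ?g x u)"
    by (rule sum.cong) (use 1(5) in \<open>auto simp: power2_commute\<close>)
  have "(\<Sum>u\<in>set (x#y#zs). \<Sum>w\<in>set (x#y#zs). ?g u w)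
      = ?g x x + (\<Sum>w\<in>?T. ?g x w) + (\<Sum>u\<in>?T. ?g u x) + (\<Sum>u\<in>?T. \<Sum>w\<in>?T. ?g u w)"
    using xT fin by (simp add: sum.insert sum.distrib algebra_simps del: set_simps(2)) (simp add: sum.distrib)
  then show ?case using IH s1 s2 axy by (simp add: power2_commute)
qed auto

lemma Hv_formula:
  assumes "\<Delta> \<in> carrier_mat N N" "diagonal_mat \<Delta>" "v \<in> carrier_vec N" "\<And>i. i<N \<Longrightarrow> a i i = 0" "i < N"
  shows "((laplacian N a + \<Delta>) *\<^sub>v v) $ i = (\<Sum>j<N. a i j * (v$i - v$j)) + \<Delta>$$(i,i) * v$i"
proof -
  have L: "laplacian N a \<in> carrier_mat N N" by (simp add: laplacian_def)
  have "((laplacian N a + \<Delta>) *\<^sub>v v) $ i = (\<Sum>j<N. (laplacian N a + \<Delta>) $$ (i,j) * v$j)"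
    using assms L by (simp add: scalar_prod_def lessThan_atLeast0)
  also have "\<dots> = (\<Sum>j<N. (if j = i then ((\<Sum>k<N. a i k) + \<Delta>$$(i,i)) * v$j else 0) - a i j * v$j)"
  proof (rule sum.cong)
    fix j assume j: "j \<in> {..<N}"
    have "\<Delta> $$ (i,j) = (if j = i then \<Delta>$$(i,i) else 0)" using assms(1,2,5) j
      unfolding diagonal_mat_def by auto
    then show "(laplacian N a + \<Delta>) $$ (i,j) * v$j = (if j = i then ((\<Sum>k<N. a i k) + \<Delta>$$(i,i)) * v$j else 0) - a i j * v$j"
      using assms j by (auto simp: laplacian_def algebra_simps)
  qed simp
  also have "\<dots> = ((\<Sum>k<N. a i k) + \<Delta>$$(i,i)) * v$i - (\<Sum>j<N. a i j * v$j)"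
    using assms(5) by (simp add: sum_subtractf sum.delta)
  also have "\<dots> = (\<Sum>j<N. a i j * (v$i - v$j)) + \<Delta>$$(i,i) * v$i"
    by (simp add: algebra_simps sum_subtractf sum_distrib_right sum_distrib_left)
  finally show ?thesis .
qed

lemma sym_quad:
  fixes x :: "nat \<Rightarrow> real"
  assumes "\<And>i j. i \<in> C \<Longrightarrow> j \<in> C \<Longrightarrow> a i j = a j i"
  shows "(\<Sum>i\<in>C. x i * (\<Sum>j\<in>C. a i j * (x i - x j))) = (\<Sum>i\<in>C. \<Sum>j\<in>C. a i j * (x i - x j)^2) / 2"
proof -
  let ?A = "\<Sum>i\<in>C. \<Sum>j\<in>C. a i j * (x i * (x i - x j))"
  have "?A = (\<Sum>j\<in>C. \<Sum>i\<in>C. a i j * (x i * (x i - x j)))" by (rule sum.swap)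
  also have "\<dots> = (\<Sum>i\<in>C. \<Sum>j\<in>C. a i j * (x j * (x j - x i)))"
    using assms by (intro sum.cong refl) auto
  finally have e: "?A = \<dots>" .
  have "(\<Sum>i\<in>C. \<Sum>j\<in>C. a i j * (x i - x j)^2) = ?A + (\<Sum>i\<in>C. \<Sum>j\<in>C. a i j * (x j * (x j - x i)))"
    by (simp add: sum.distrib[symmetric] power2_eq_square algebra_simps)
  also have "\<dots> = 2 * ?A" using e by simp
  finally show ?thesis by (simp add: sum_distrib_left algebra_simps)
qed

lemma sym_lin:
  fixes x :: "nat \<Rightarrow> real"
  assumes "\<And>i j. i \<in> C \<Longrightarrow> j \<in> C \<Longrightarrow> a i j = a j i"
  shows "(\<Sum>i\<in>C. \<Sum>j\<in>C. a i j * (x i - x j)) = 0"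
proof -
  let ?A = "\<Sum>i\<in>C. \<Sum>j\<in>C. a i j * (x i - x j)"
  have "?A = (\<Sum>j\<in>C. \<Sum>i\<in>C. a i j * (x i - x j))" by (rule sum.swap)
  also have "\<dots> = (\<Sum>i\<in>C. \<Sum>j\<in>C. - (a i j * (x i - x j)))"
    using assms by (intro sum.cong refl) (auto simp: algebra_simps)
  also have "\<dots> = - ?A" by (simp add: sum_negf)
  finally show ?thesis by simp
qed

lemma sq_sum_identity:
  fixes x :: "nat \<Rightarrow> real"
  assumes "finite C"
  shows "(\<Sum>i\<in>C. \<Sum>j\<in>C. (x i - x j)^2) = 2 * card C * (\<Sum>i\<in>C. (x i)^2) - 2 * (\<Sum>i\<in>C. x i)^2"
  by (simp add: power2_eq_square algebra_simps sum.distrib sum_subtractf sum_distrib_left sum_distrib_right)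


theorem lemma3:
  fixes N :: nat and a :: "nat \<Rightarrow> nat \<Rightarrow> real" and \<Delta> :: "real mat" and \<mu> :: real
  assumes "N \<ge> 1"
    and "\<And>i j. i < N \<Longrightarrow> j < N \<Longrightarrow> a i j \<in> {0, 1}"
    and "\<And>i j. i < N \<Longrightarrow> j < N \<Longrightarrow> a i j = a j i"
    and "\<And>i. i < N \<Longrightarrow> a i i = 0"
    and "\<Delta> \<in> carrier_mat N N" and "diagonal_mat \<Delta>"
    and "\<And>i. i < N \<Longrightarrow> \<Delta> $$ (i, i) \<in> {0, 1}"
    and "eigenvalue (laplacian N a + \<Delta>) \<mu>" and "\<mu> \<noteq> 0"
  shows "4 / (real N * (real N ^ 2 - real N + 4)) > 0
         \<and> \<mu> \<ge> 4 / (real N * (real N ^ 2 - real N + 4))"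
proof -
  define K where "K = real N * (real N ^ 2 - real N + 4) / 4"
  have N1: "real N \<ge> 1" using assms(1) by simp
  have "real N ^ 2 \<ge> real N" using N1 by (simp add: power2_eq_square)
  then have "real N ^ 2 - real N + 4 > 0" by linarith
  then have Kpos: "K > 0" unfolding K_def using N1 by simp
  have Keq: "4 / (real N * (real N ^ 2 - real N + 4)) = 1 / K" unfolding K_def by simp
  have dimH: "dim_row (laplacian N a + \<Delta>) = N" using assms(5) by simp
  obtain v where v: "v \<in> carrier_vec N" "v \<noteq> 0\<^sub>v N" "(laplacian N a + \<Delta>) *\<^sub>v v = \<mu> \<cdot>\<^sub>v v"
    using assms(8) unfolding eigenvalue_def eigenvector_def dimH by blast
  define x where "x i = v $ i" for i
  define \<delta> where "\<delta> i = \<Delta> $$ (i,i)" for i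
  obtain i0 where i0: "i0 < N" "x i0 \<noteq> 0"
    using v(1,2) unfolding x_def by (metis eq_vecI index_zero_vec(1,2) carrier_vecD)
  define C where "C = {j. reach N a i0 j}"
  have CN: "C \<subseteq> {..<N}" unfolding C_def using reach_lt by blast
  have finC: "finite C" using CN finite_subset by blast
  have i0C: "i0 \<in> C" unfolding C_def using i0 by (simp add: reach.rrefl)
  have closed: "a i j = 0" if "i \<in> C" "j < N" "j \<notin> C" for i j
  proof -
    have "i < N" using that CN by auto
    then have "a i j \<in> {0,1}" using assms(2) that by simp
    moreover have "a i j \<noteq> 1" using that reach.rstep[of N a i0 i j] unfolding C_def by auto
    ultimately show ?thesis by auto
  qed
  have symC: "a i j = a j i" if "i \<in> C" "j \<in> C" for i j using that CN assms(3) by auto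
  have a_nn: "a i j \<ge> 0" if "i \<in> C" "j \<in> C" for i j
  proof -
    have "a i j \<in> {0,1}" using assms(2) that CN by auto
    then show ?thesis by auto
  qed
  have d01: "\<delta> i \<in> {0,1}" if "i \<in> C" for i using assms(7) that CN unfolding \<delta>_def by auto
  have eq: "\<mu> * x i = (\<Sum>j\<in>C. a i j * (x i - x j)) + \<delta> i * x i" if iC: "i \<in> C" for i
  proof -
    have iN: "i < N" using iC CN by auto
    have "\<mu> * x i = ((laplacian N a + \<Delta>) *\<^sub>v v) $ i" using v(1,3) iN unfolding x_def by simp
    also have "\<dots> = (\<Sum>j<N. a i j * (x i - x j)) + \<delta> i * x i"
      unfolding x_def \<delta>_def by (rule Hv_formula[OF assms(5,6) v(1) assms(4) iN])
    also have "(\<Sum>j<N. a i j * (x i - x j)) = (\<Sum>j\<in>C. a i j * (x i - x j))"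
      by (rule sum.mono_neutral_right) (use CN closed iC in auto)
    finally show ?thesis .
  qed
  define Qe where "Qe = (\<Sum>i\<in>C. \<Sum>j\<in>C. a i j * (x i - x j)^2)"
  define Qd where "Qd = (\<Sum>i\<in>C. \<delta> i * (x i)^2)"
  define S where "S = (\<Sum>i\<in>C. (x i)^2)"
  have Spos: "S > 0" unfolding S_def
    by (rule sum_pos2[OF finC i0C]) (use i0 in auto)
  have Qe_nn: "Qe \<ge> 0" unfolding Qe_def using a_nn by (intro sum_nonneg) auto
  have d_nn: "\<delta> i \<ge> 0" if "i \<in> C" for i using d01[OF that] by auto
  have Qd_nn: "Qd \<ge> 0" unfolding Qd_def using d_nn by (intro sum_nonneg) auto
  have muS: "\<mu> * S = Qe/2 + Qd"
  proof -
    have "\<mu> * S = (\<Sum>i\<in>C. x i * (\<mu> * x i))" unfolding S_def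
      by (simp add: sum_distrib_left power2_eq_square algebra_simps)
    also have "\<dots> = (\<Sum>i\<in>C. x i * (\<Sum>j\<in>C. a i j * (x i - x j)) + \<delta> i * (x i)^2)"
      using eq by (intro sum.cong refl) (simp add: algebra_simps power2_eq_square)
    also have "\<dots> = Qe/2 + Qd" unfolding Qe_def Qd_def
      by (simp add: sum.distrib sym_quad[of C a x, OF symC])
    finally show ?thesis .
  qed
  have pair: "(x i - x j)^2 \<le> (real N - 1) * (Qe/2)" if iC: "i \<in> C" and jC: "j \<in> C" for i j
  proof -
    have r0j: "reach N a i0 j" "reach N a i0 i" using iC jC unfolding C_def by auto
    have "reach N a j i0" by (rule reach_sym[OF assms(3) r0j(1)])
    then have "reach N a j i" using reach_trans r0j(2) by blast
    then obtain p where p: "p \<noteq> []" "hd p = j" "last p = i" "distinct p"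
      "successively (\<lambda>x y. a x y = 1) p" "\<forall>y\<in>set p. reach N a j y"
      using reach_path by blast
    have pC: "set p \<subseteq> C" using p(6) r0j(1) reach_trans unfolding C_def by blast
    have "length p = card (set p)" using p(4) by (simp add: distinct_card)
    also have "\<dots> \<le> card {..<N}" using pC CN by (intro card_mono) auto
    finally have lenp: "length p \<le> N" by simp
    have ps: "2 * psum x p \<le> Qe"
    proof -
      have "2 * psum x p \<le> (\<Sum>u\<in>set p. \<Sum>w\<in>set p. a u w * (x u - x w)^2)"
        by (rule psum_edges[OF p(4,5)]) (use pC a_nn symC in blast)+
      also have "\<dots> \<le> (\<Sum>u\<in>set p. \<Sum>w\<in>C. a u w * (x u - x w)^2)"
        by (intro sum_mono sum_mono2 finC pC) (use pC a_nn in auto)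
      also have "\<dots> \<le> Qe" unfolding Qe_def
        by (intro sum_mono2 finC pC sum_nonneg) (use a_nn in auto)
      finally show ?thesis .
    qed
    have "(x i - x j)^2 \<le> real (length p - 1) * psum x p"
      using psum_cs[OF p(1), of x] p(2,3) by simp
    also have "\<dots> \<le> (real N - 1) * psum x p"
    proof (rule mult_right_mono)
      have "length p \<ge> 1" using p(1) by (cases p) auto
      then show "real (length p - 1) \<le> real N - 1" using lenp by (simp add: of_nat_diff)
    qed (rule psum_nonneg)
    also have "\<dots> \<le> (real N - 1) * (Qe/2)"
      using ps N1 by (intro mult_left_mono) auto
    finally show ?thesis .
  qed
  have bound: "S \<le> K * (Qe/2 + Qd)"
  proof (cases "\<exists>r\<in>C. \<delta> r \<noteq> 0")
    case True
    then obtain r where rC: "r \<in> C" and dr: "\<delta> r = 1" using d01 by blast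
    have xr: "(x r)^2 \<le> Qd" unfolding Qd_def
      using member_le_sum[OF rC, of "\<lambda>i. \<delta> i * (x i)^2"] d_nn finC dr by auto
    have each: "(x i)^2 \<le> real N * (Qe/2 + Qd)" if iC: "i \<in> C" for i
    proof -
      have "(x i)^2 = (x r + (x i - x r))^2" by simp
      also have "\<dots> \<le> (real N - 1 + 1) * ((x r)^2 + Qe/2)"
        by (rule aux_ineq) (use pair[OF iC rC] Qe_nn N1 in auto)
      also have "\<dots> \<le> real N * (Qe/2 + Qd)" using xr N1 by simp
      finally show ?thesis .
    qed
    have "S = (x r)^2 + (\<Sum>i\<in>C - {r}. (x i)^2)" unfolding S_def
      using finC rC by (simp add: sum.remove)
    also have "\<dots> \<le> (Qe/2 + Qd) + real (card (C - {r})) * (real N * (Qe/2 + Qd))"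
      using xr Qe_nn each by (intro add_mono sum_bounded_above) auto
    also have "\<dots> \<le> (Qe/2 + Qd) + (real N - 1) * (real N * (Qe/2 + Qd))"
    proof -
      have "card (C - {r}) = card C - 1" using finC rC by simp
      moreover have "card C \<le> N" using CN card_mono[of "{..<N}" C] by auto
      ultimately have "real (card (C - {r})) \<le> real N - 1" using assms(1) by auto
      then show ?thesis using Qe_nn Qd_nn N1 by (intro add_left_mono mult_right_mono) auto
    qed
    also have "\<dots> = (1 + (real N - 1) * real N) * (Qe/2 + Qd)" by (simp add: field_simps)
    also have "\<dots> \<le> K * (Qe/2 + Qd)"
    proof (rule mult_right_mono)
      have "0 \<le> (real N - 1) * (real N - 2)^2" using N1 by simp
      then show "1 + (real N - 1) * real N \<le> K" unfolding K_def
        by (simp add: power2_eq_square algebra_simps)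
    qed (use Qe_nn Qd_nn in auto)
    finally show ?thesis .
  next
    case False
    then have d0: "\<delta> i = 0" if "i \<in> C" for i using that by blast
    have Qd0: "Qd = 0" unfolding Qd_def using d0 by simp
    have "\<mu> * (\<Sum>i\<in>C. x i) = (\<Sum>i\<in>C. \<mu> * x i)" by (simp add: sum_distrib_left)
    also have "\<dots> = (\<Sum>i\<in>C. \<Sum>j\<in>C. a i j * (x i - x j))"
      using eq d0 by (intro sum.cong refl) auto
    also have "\<dots> = 0" by (rule sym_lin[OF symC])
    finally have sum0: "(\<Sum>i\<in>C. x i) = 0" using assms(9) by simp
    have nC: "card C \<ge> 1" using finC i0C card_0_eq by fastforce
    have cN: "card C \<le> N" using CN card_mono[of "{..<N}" C] by auto
    have "2 * real (card C) * S = (\<Sum>i\<in>C. \<Sum>j\<in>C. (x i - x j)^2)"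
      using sq_sum_identity[OF finC, of x] sum0 unfolding S_def by simp
    also have "\<dots> \<le> real (card C) * (real (card C) * ((real N - 1) * (Qe/2)))"
      using pair by (intro sum_bounded_above) auto
    finally have "2 * real (card C) * S \<le> real (card C) * (real (card C) * ((real N - 1) * (Qe/2)))" .
    then have "2 * S \<le> real (card C) * ((real N - 1) * (Qe/2))" using nC by simp
    also have "\<dots> \<le> real N * ((real N - 1) * (Qe/2))"
      using cN N1 Qe_nn by (intro mult_right_mono) auto
    finally have "S \<le> (real N * (real N - 1) / 2) * (Qe/2)" by simp
    also have "\<dots> \<le> K * (Qe/2)"
    proof (rule mult_right_mono)
      have h: "0 \<le> real N * ((real N - 2)^2 + 2) + (real N)^2" using N1 by simp
      have "real N * (real N ^ 2 - real N + 4) - 2 * (real N * (real N - 1))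
          = real N * ((real N - 2)^2 + 2) + (real N)^2" by (simp add: power2_eq_square algebra_simps)
      then have "2 * (real N * (real N - 1)) \<le> real N * (real N ^ 2 - real N + 4)" using h by linarith
      then show "real N * (real N - 1) / 2 \<le> K" unfolding K_def by simp
    qed (use Qe_nn in auto)
    finally show ?thesis using Qd0 by simp
  qed
  have "S \<le> K * (\<mu> * S)" using bound muS by simp
  then have "1 \<le> K * \<mu>" using Spos by (simp add: algebra_simps)
  then have "1 / K \<le> \<mu>" using Kpos by (simp add: field_simps)
  then show ?thesis using Kpos Keq by simp
qed

end
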